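(* Let $\gamma_1,\gamma_2\in\mathbb{C}$ with $\mathrm{Re}(\gamma_i)>0$, let $H^i(s)=\gamma_i/(s+\gamma_i)$ with impulse responses $h^i_t=\gamma_ie^{-\gamma_it}$ ($t\ge0$), and let $H=H^1H^2$ with impulse response $h=h^1*h^2$. Let $g\colon\mathbb{R}_+\to\mathbb{C}$ be twice continuously differentiable and bounded, with $\|g\|_\infty=\sup_t|g_t|$, and set $\hat g^{(m)}_t=\int_0^th_{t-\tau}g^{(m)}_\tau\,d\tau$, where $g^{(m)}$ is the $m$-th derivative. Then, as $t\to\infty$, $$|\hat g^{(1)}_t|\le|\gamma_1|\big(\|h^2\|_1+\|h\|_1\big)\|g\|_\infty+o(1),\qquad |\hat g^{(2)}_t|\le|\gamma_1\gamma_2|\big(1+\|h^1\|_1+\|h^2\|_1+\|h\|_1\big)\|g\|_\infty+o(1),$$ where $\|\cdot\|_1$ is the $L_1(\mathbb{R}_+)$ norm and $o(1)$ denotes a term (depending on $g$) that vanishes as $t\to\infty$. In the special case $H(s)=\gamma^2/(s^2+2\zeta\gamma s+\gamma^2)$ with $\gamma>0$ and $0<\zeta\le1$ (i.e. $-\gamma_1,-\gamma_2$ the roots of $s^2+2\zeta\gamma s+\gamma^2$), $$\|h^2\|_1=\|h^1\|_1\le\frac1\zeta,\qquad \|h\|_1\le\frac1{\zeta^2}.$$ *)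

theory Defs
  imports "HOL-Analysis.Analysis"
begin

definition impresp :: "complex \<Rightarrow> real \<Rightarrow> complex" where
  "impresp \<gamma> t = \<gamma> * exp (- \<gamma> * complex_of_real t)"

definition cconv :: "(real \<Rightarrow> complex) \<Rightarrow> (real \<Rightarrow> complex) \<Rightarrow> real \<Rightarrow> complex" where
  "cconv f g t = integral {0..t} (\<lambda>\<tau>. f (t - \<tau>) * g \<tau>)"

definition L1norm :: "(real \<Rightarrow> complex) \<Rightarrow> real" where
  "L1norm f = integral {0..} (\<lambda>t. norm (f t))"

definition supnorm :: "(real \<Rightarrow> complex) \<Rightarrow> real" where
  "supnorm g = Sup ((\<lambda>t. norm (g t)) ` {0..})"

end

theory Submission imports Defs "HOL-Real_Asymp.Real_Asymp" begin

definition Phi :: "complex \<Rightarrow> complex \<Rightarrow> complex" where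
  "Phi c z = (if c = 0 then z else (exp (c * z) - 1) / c)"

lemma Phi_deriv: "(Phi c has_field_derivative exp (c * z)) (at z within S)"
proof (cases "c = 0")
  case True
  then have "Phi c = (\<lambda>z. z)" by (auto simp: Phi_def fun_eq_iff)
  then show ?thesis using True by (auto intro!: derivative_eq_intros)
next
  case False
  then have "Phi c = (\<lambda>z. (exp (c * z) - 1) / c)" by (auto simp: Phi_def fun_eq_iff)
  then show ?thesis using False by (auto intro!: derivative_eq_intros)
qed

lemma Phi_0[simp]: "Phi c 0 = 0" by (simp add: Phi_def)

lemma Phi_mult: "c * Phi c z = exp (c * z) - 1"
  by (simp add: Phi_def)

definition Hc :: "complex \<Rightarrow> complex \<Rightarrow> real \<Rightarrow> complex" where
  "Hc a b t = a * b * exp (- a * of_real t) * Phi (a - b) (of_real t)"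

definition Hd :: "complex \<Rightarrow> complex \<Rightarrow> real \<Rightarrow> complex" where
  "Hd a b t = a * (impresp b t - Hc a b t)"

definition Hdd :: "complex \<Rightarrow> complex \<Rightarrow> real \<Rightarrow> complex" where
  "Hdd a b t = - (a * b) * (impresp b t + impresp a t - Hc a b t)"

lemma exp_id: "exp (- a * z) * exp ((a - b) * z) = exp (- b * (z::complex))"
proof -
  have "- a * z + (a - b) * z = - b * z" by (simp add: algebra_simps)
  then show ?thesis by (metis mult_exp_exp)
qed

lemma impresp_deriv: "(impresp g has_vector_derivative (- g * impresp g t)) (at t within S)"
proof -
  have eq: "impresp g = (\<lambda>x. g * exp (- g * of_real x))" by (rule ext) (simp add: impresp_def)
  have "((\<lambda>z. g * exp (- g * z)) has_field_derivative (- g * (g * exp (- g * of_real t)))) (at (of_real t))"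
    by (auto intro!: derivative_eq_intros simp: algebra_simps)
  from has_vector_derivative_real_field[OF this] show ?thesis
    unfolding eq by simp
qed

lemma Hc_deriv: "(Hc a b has_vector_derivative Hd a b t) (at t within S)"
proof -
  let ?z = "complex_of_real t"
  have "((\<lambda>z. a * b * exp (- a * z) * Phi (a - b) z) has_field_derivative
     (a * b * (- a * exp (- a * ?z)) * Phi (a - b) ?z + a * b * exp (- a * ?z) * exp ((a - b) * ?z))) (at ?z)"
    by (auto intro!: derivative_eq_intros Phi_deriv simp: algebra_simps)
  also have "(a * b * (- a * exp (- a * ?z)) * Phi (a - b) ?z + a * b * exp (- a * ?z) * exp ((a - b) * ?z))
     = Hd a b t"
    unfolding Hd_def Hc_def impresp_def
    using exp_id[of a ?z b] by (simp add: algebra_simps)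
  finally show ?thesis
    using has_vector_derivative_real_field[of "\<lambda>z. a * b * exp (- a * z) * Phi (a - b) z"]
    unfolding Hc_def by blast
qed

lemma Hd_sym: "Hd a b t = b * (impresp a t - Hc a b t)"
proof -
  let ?z = "complex_of_real t"
  have "(a - b) * Hc a b t = a * b * exp (- a * ?z) * ((a - b) * Phi (a - b) ?z)"
    unfolding Hc_def by (simp add: algebra_simps)
  also have "\<dots> = a * b * (exp (- a * ?z) * exp ((a - b) * ?z)) - a * b * exp (- a * ?z)"
    by (simp add: Phi_mult algebra_simps)
  also have "\<dots> = a * impresp b t - b * impresp a t"
    by (simp only: exp_id) (simp add: impresp_def algebra_simps)
  finally show ?thesis unfolding Hd_def by (simp add: algebra_simps)
qed

lemma Hd_deriv: "(Hd a b has_vector_derivative Hdd a b t) (at t within S)"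
proof -
  have "((\<lambda>t. a * (impresp b t - Hc a b t)) has_vector_derivative a * (- b * impresp b t - Hd a b t)) (at t within S)"
    by (intro has_vector_derivative_mult_right has_vector_derivative_diff impresp_deriv Hc_deriv)
  moreover have "a * (- b * impresp b t - Hd a b t) = Hdd a b t"
    unfolding Hdd_def
    by (subst Hd_sym) (simp add: algebra_simps)
  ultimately show ?thesis unfolding Hd_def[abs_def] by simp
qed

lemma Phi_vderiv: "((\<lambda>x. Phi c (of_real x)) has_vector_derivative exp (c * of_real x)) (at x within S)"
  by (rule has_vector_derivative_real_field[OF Phi_deriv])

lemma cont_impresp: "continuous_on S (impresp g)"
  by (rule continuous_on_vector_derivative) (rule impresp_deriv)
lemma cont_Hc: "continuous_on S (Hc a b)"
  by (rule continuous_on_vector_derivative) (rule Hc_deriv)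
lemma cont_Hd: "continuous_on S (Hd a b)"
  by (rule continuous_on_vector_derivative) (rule Hd_deriv)
lemma cont_Hdd: "continuous_on S (Hdd a b)"
  unfolding Hdd_def by (intro continuous_intros cont_impresp cont_Hc)

lemma Hc_eq:
  assumes "t \<ge> 0"
  shows "cconv (impresp a) (impresp b) t = Hc a b t"
proof -
  have pt: "impresp a (t - \<tau>) * impresp b \<tau> = (a * b * exp (- a * of_real t)) * exp ((a - b) * of_real \<tau>)" for \<tau>
  proof -
    have "exp (- a * of_real (t - \<tau>)) * exp (- b * of_real \<tau>) = exp (- a * of_real t) * exp ((a - b) * of_real \<tau>)"
      unfolding mult_exp_exp by (simp add: algebra_simps)
    then show ?thesis unfolding impresp_def by (simp add: algebra_simps)
  qed
  have "((\<lambda>\<tau>. exp ((a - b) * of_real \<tau>)) has_integral (Phi (a - b) (of_real t) - Phi (a - b) (of_real 0))) {0..t}"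
    using assms by (intro fundamental_theorem_of_calculus Phi_vderiv) 
  then have "((\<lambda>\<tau>. (a * b * exp (- a * of_real t)) * exp ((a - b) * of_real \<tau>)) has_integral
      (a * b * exp (- a * of_real t)) * Phi (a - b) (of_real t)) {0..t}"
    by (intro has_integral_mult_right) simp
  then show ?thesis unfolding cconv_def pt Hc_def by (rule integral_unique)
qed

lemma norm_impresp: "norm (impresp g t) = norm g * exp (- Re g * t)"
  by (simp add: impresp_def norm_mult norm_exp_eq_Re)

lemma Hc_bound:
  assumes "t \<ge> 0"
  shows "norm (Hc a b t) \<le> norm a * norm b * exp (- min (Re a) (Re b) * t) * t"
proof -
  let ?m = "min (Re a) (Re b)"
  let ?f = "\<lambda>\<tau>. impresp a (t - \<tau>) * impresp b \<tau>"
  have "continuous_on {0..t} ?f"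
    by (intro continuous_intros cont_impresp continuous_on_compose2[OF cont_impresp[of UNIV]]) auto
  then have "(?f has_integral integral {0..t} ?f) {0..t}"
    by (intro integrable_integral integrable_continuous_interval)
  moreover have "norm (?f \<tau>) \<le> norm a * norm b * exp (- ?m * t)" if "\<tau> \<in> {0..t}" for \<tau>
  proof -
    have "?m * (t - \<tau>) + ?m * \<tau> \<le> Re a * (t - \<tau>) + Re b * \<tau>"
      using that by (intro add_mono mult_right_mono) auto
    then have "exp (- Re a * (t - \<tau>)) * exp (- Re b * \<tau>) \<le> exp (- ?m * t)"
      unfolding mult_exp_exp by (simp add: algebra_simps)
    then show ?thesis unfolding norm_mult norm_impresp
      by (simp add: mult_left_mono algebra_simps)
  qed
  ultimately have "norm (integral {0..t} ?f) \<le> norm a * norm b * exp (- ?m * t) * Henstock_Kurzweil_Integration.content {0..t}"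
    by (intro has_integral_bound_real[where S="{}"]) auto
  moreover have "Henstock_Kurzweil_Integration.content {0..t} = t" using assms by simp
  moreover have "integral {0..t} ?f = Hc a b t" using Hc_eq[OF assms, of a b] unfolding cconv_def .
  ultimately show ?thesis by simp
qed

lemma exp_lim: "m > 0 \<Longrightarrow> ((\<lambda>t::real. exp (- m * t)) \<longlongrightarrow> 0) at_top"
  by real_asymp
lemma texp_lim: "m > 0 \<Longrightarrow> ((\<lambda>t::real. exp (- m * t) * t) \<longlongrightarrow> 0) at_top"
  by real_asymp

lemma impresp_lim:
  assumes "Re g > 0" shows "(impresp g \<longlongrightarrow> 0) at_top"
proof -
  have "((\<lambda>t. norm g * exp (- Re g * t)) \<longlongrightarrow> 0) at_top"
    by (rule tendsto_mult_right_zero[OF exp_lim[OF assms]])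
  then show ?thesis
    by (rule Lim_null_comparison[rotated]) (simp add: norm_impresp)
qed

lemma Hc_lim:
  assumes "Re a > 0" "Re b > 0" shows "(Hc a b \<longlongrightarrow> 0) at_top"
proof -
  let ?m = "min (Re a) (Re b)"
  have "((\<lambda>t. norm a * norm b * (exp (- ?m * t) * t)) \<longlongrightarrow> 0) at_top"
    using assms by (intro tendsto_mult_right_zero texp_lim) auto
  moreover have "eventually (\<lambda>t. norm (Hc a b t) \<le> norm a * norm b * (exp (- ?m * t) * t)) at_top"
    using eventually_ge_at_top[of "0::real"]
  proof eventually_elim
    case (elim t)
    show ?case using Hc_bound[OF elim, of a b] by (simp add: mult.assoc)
  qed
  ultimately show ?thesis
    by (rule Lim_null_comparison[rotated])
qed

lemma Hd_lim:
  assumes "Re a > 0" "Re b > 0" shows "(Hd a b \<longlongrightarrow> 0) at_top"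
proof -
  have "((\<lambda>t. a * (impresp b t - Hc a b t)) \<longlongrightarrow> a * (0 - 0)) at_top"
    using assms by (intro tendsto_mult tendsto_const tendsto_diff impresp_lim Hc_lim) auto
  then show ?thesis by (simp add: Hd_def[abs_def])
qed

lemma int_impresp:
  assumes "Re g > 0"
  shows "((\<lambda>t. norm (impresp g t)) has_integral norm g / Re g) {0..}"
proof -
  have "((\<lambda>t. norm g * exp (- Re g * t)) has_integral norm g * (exp (- Re g * 0) / Re g)) {0..}"
    by (intro has_integral_mult_right has_integral_exp_minus_to_infinity assms)
  then show ?thesis by (simp add: norm_impresp)
qed

lemma L1norm_impresp: "Re g > 0 \<Longrightarrow> L1norm (impresp g) = norm g / Re g"
  unfolding L1norm_def by (rule integral_unique[OF int_impresp])

lemma int_texp: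
  fixes a :: real
  assumes "a > 0"
  shows "((\<lambda>t. exp (- a * t) * t) has_integral 1 / a\<^sup>2) {0..}"
proof (rule has_integral_to_inf)
  show "(\<lambda>t. exp (- a * t) * t) integrable_on {0..y}" for y
    by (intro integrable_continuous_interval continuous_intros)
  have ftc: "((\<lambda>t. exp (- a * t) * t) has_integral
     ((- (y / a + 1 / a\<^sup>2) * exp (- a * y)) - (- (0 / a + 1 / a\<^sup>2) * exp (- a * 0)))) {0..y}"
    if "y \<ge> 0" for y
    using that assms
    by (intro fundamental_theorem_of_calculus)
       (auto intro!: derivative_eq_intros simp: field_simps power2_eq_square
             simp flip: has_real_derivative_iff_has_vector_derivative)
  have "\<forall>\<^sub>F y in at_top. integral {0..y} (\<lambda>t. exp (- a * t) * t) =
       (- (y / a + 1 / a\<^sup>2) * exp (- a * y)) + 1 / a\<^sup>2"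
    using eventually_ge_at_top[of "0::real"]
  proof eventually_elim
    case (elim y)
    show ?case using integral_unique[OF ftc[OF elim]] by simp
  qed
  moreover have "((\<lambda>y::real. (- (y / a + 1 / a\<^sup>2) * exp (- a * y)) + 1 / a\<^sup>2) \<longlongrightarrow> 1 / a\<^sup>2) at_top"
    using assms by real_asymp
  ultimately show "((\<lambda>y. integral {0..y} (\<lambda>t. exp (- a * t) * t)) \<longlongrightarrow> 1 / a\<^sup>2) at_top"
    by (simp add: filterlim_cong)
  show "0 \<le> exp (- a * y) * y" if "0 \<le> y" for y using that by simp
qed

lemma Hc_int:
  assumes "Re a > 0" "Re b > 0"
  shows "(\<lambda>t. norm (Hc a b t)) integrable_on {0..}"
proof (rule measurable_bounded_by_integrable_imp_integrable)
  show "(\<lambda>t. norm (Hc a b t)) \<in> borel_measurable (lebesgue_on {0..})"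
    by (intro continuous_imp_measurable_on_sets_lebesgue continuous_intros cont_Hc) auto
  show "{0::real..} \<in> sets lebesgue" by simp
  have "min (Re a) (Re b) > 0" using assms by simp
  from has_integral_mult_right[OF int_texp[OF this], of "norm a * norm b"]
  show "(\<lambda>t. norm a * norm b * (exp (- min (Re a) (Re b) * t) * t)) integrable_on {0..}"
    by (auto simp: integrable_on_def)
  show "norm (norm (Hc a b t)) \<le> norm a * norm b * (exp (- min (Re a) (Re b) * t) * t)"
    if "t \<in> {0..}" for t
    using Hc_bound[of t a b] that by (simp add: mult.assoc)
qed

lemma supnorm_ge:
  assumes "bounded (g ` {0..})" "\<tau> \<ge> 0"
  shows "norm (g \<tau>) \<le> supnorm g"
proof -
  from assms(1) obtain B where B: "\<And>x. x \<in> g ` {0..} \<Longrightarrow> norm x \<le> B"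
    unfolding bounded_iff by blast
  have "bdd_above ((\<lambda>t. norm (g t)) ` {0..})"
    using B by (intro bdd_aboveI[of _ B]) auto
  then show ?thesis unfolding supnorm_def
    using assms(2) by (intro cSUP_upper) auto
qed

lemma reflect_shift_integral:
  fixes w :: "real \<Rightarrow> real"
  shows   "integral {0..t} (\<lambda>\<tau>. w (t - \<tau>)) = integral {0..t::real} w"
proof -
  have "integral {-0..-(-t)} (\<lambda>x. w (t + - x)) = integral {-t..0} (\<lambda>x. w (t + x))"
    by (rule Henstock_Kurzweil_Integration.integral_reflect_real[where f="\<lambda>x. w (t + x)"])
  also have "\<dots> = integral {0 - t..t - t} (\<lambda>x. w (x + t))" by (simp add: add.commute)
  also have "\<dots> = integral {0..t} w" by (rule integral_shift_real_ivl)
  finally show ?thesis by simp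
qed

lemma conv_bound:
  fixes k g :: "real \<Rightarrow> complex" and w :: "real \<Rightarrow> real"
  assumes kc: "continuous_on UNIV k" and wc: "continuous_on {0..} w" and wi: "w integrable_on {0..}"
    and kw: "\<And>s. s \<ge> 0 \<Longrightarrow> norm (k s) \<le> w s"
    and gc: "continuous_on {0..t} g" and gG: "\<And>\<tau>. \<tau> \<in> {0..t} \<Longrightarrow> norm (g \<tau>) \<le> G"
    and t: "t \<ge> 0"
  shows "norm (integral {0..t} (\<lambda>\<tau>. k (t - \<tau>) * g \<tau>)) \<le> integral {0..} w * G"
proof -
  have G0: "G \<ge> 0" using gG[of 0] t by (meson atLeastAtMost_iff norm_ge_zero order.trans order_refl)
  have w0: "s \<ge> 0 \<Longrightarrow> w s \<ge> 0" for s using kw[of s] norm_ge_zero order.trans by blast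
  have c1: "continuous_on {0..t} (\<lambda>\<tau>. k (t - \<tau>))"
    by (rule continuous_on_compose2[OF kc]) (auto intro!: continuous_intros)
  have c2: "continuous_on {0..t} (\<lambda>\<tau>. w (t - \<tau>))"
    by (rule continuous_on_compose2[OF wc]) (auto intro!: continuous_intros)
  have i1: "(\<lambda>\<tau>. k (t - \<tau>) * g \<tau>) integrable_on {0..t}"
    by (intro integrable_continuous_interval continuous_intros c1 gc)
  have i2: "(\<lambda>\<tau>. w (t - \<tau>) * G) integrable_on {0..t}"
    by (intro integrable_continuous_interval continuous_intros c2)
  have "norm (integral {0..t} (\<lambda>\<tau>. k (t - \<tau>) * g \<tau>)) \<le> integral {0..t} (\<lambda>\<tau>. w (t - \<tau>) * G)"
  proof (rule integral_norm_bound_integral[OF i1 i2])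
    fix \<tau> assume "\<tau> \<in> {0..t}"
    then show "norm (k (t - \<tau>) * g \<tau>) \<le> w (t - \<tau>) * G"
      unfolding norm_mult by (intro mult_mono kw gG G0 w0) auto
  qed
  also have "\<dots> = integral {0..t} w * G"
    by (simp add: reflect_shift_integral)
  also have "\<dots> \<le> integral {0..} w * G"
  proof (rule mult_right_mono[OF _ G0], rule integral_subset_le)
    show "w integrable_on {0..t}"
      by (rule integrable_continuous_interval) (rule continuous_on_subset[OF wc], auto)
  qed (use wi w0 in auto)
  finally show ?thesis .
qed

lemma ibp:
  fixes K K' f f' :: "real \<Rightarrow> complex"
  assumes K: "\<And>s S. (K has_vector_derivative K' s) (at s within S)" and K'c: "continuous_on UNIV K'"
    and f: "\<And>s. s \<in> {0..t} \<Longrightarrow> (f has_vector_derivative f' s) (at s within {0..t})"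
    and t: "0 \<le> t"
  shows "integral {0..t} (\<lambda>\<tau>. K (t - \<tau>) * f' \<tau>) = K 0 * f t - K t * f 0 + integral {0..t} (\<lambda>\<tau>. K' (t - \<tau>) * f \<tau>)"
proof -
  have dK: "((\<lambda>\<tau>. K (t - \<tau>)) has_vector_derivative - K' (t - s)) (at s within {0..t})" for s
  proof -
    have "((\<lambda>\<tau>. t - \<tau>) has_vector_derivative -1) (at s within {0..t})"
      by (auto intro!: derivative_eq_intros simp flip: has_real_derivative_iff_has_vector_derivative)
    from vector_diff_chain_within[OF this K[of "t - s" "(\<lambda>\<tau>. t - \<tau>) ` {0..t}"]]
    show ?thesis by (simp add: o_def)
  qed
  have dF: "((\<lambda>\<tau>. K (t - \<tau>) * f \<tau>) has_vector_derivative (K (t - s) * f' s + (- K' (t - s)) * f s))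
      (at s within {0..t})" if "s \<in> {0..t}" for s
    by (rule has_vector_derivative_mult[OF dK f[OF that]])
  have I1: "((\<lambda>s. K (t - s) * f' s + (- K' (t - s)) * f s) has_integral (K (t - t) * f t - K (t - 0) * f 0)) {0..t}"
    using t dF by (intro fundamental_theorem_of_calculus) auto
  have fc: "continuous_on {0..t} f"
    by (rule continuous_on_vector_derivative) (rule f)
  have c1: "continuous_on {0..t} (\<lambda>\<tau>. K' (t - \<tau>))"
    by (rule continuous_on_compose2[OF K'c]) (auto intro!: continuous_intros)
  have I2: "((\<lambda>\<tau>. K' (t - \<tau>) * f \<tau>) has_integral integral {0..t} (\<lambda>\<tau>. K' (t - \<tau>) * f \<tau>)) {0..t}"
    by (intro integrable_integral integrable_continuous_interval continuous_intros c1 fc)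
  from has_integral_add[OF I1 I2]
  have "((\<lambda>\<tau>. K (t - \<tau>) * f' \<tau>) has_integral
      (K 0 * f t - K t * f 0 + integral {0..t} (\<lambda>\<tau>. K' (t - \<tau>) * f \<tau>))) {0..t}"
    by simp
  then show ?thesis by (rule integral_unique)
qed

lemma Hc_0[simp]: "Hc a b 0 = 0" by (simp add: Hc_def)
lemma Hd_0: "Hd a b 0 = a * b" by (simp add: Hd_def impresp_def)

lemma norm3: "norm (x + y - z) \<le> norm x + norm y + norm (z::complex)"
  using norm_triangle_ineq[of x y] norm_triangle_ineq4[of "x + y" z] by linarith

theorem propositionA8:
  fixes \<gamma>1 \<gamma>2 :: complex and g g1 g2 :: "real \<Rightarrow> complex"
  assumes "Re \<gamma>1 > 0" and "Re \<gamma>2 > 0"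
    and "\<And>t. t \<ge> 0 \<Longrightarrow> (g has_vector_derivative g1 t) (at t within {0..})"
    and "\<And>t. t \<ge> 0 \<Longrightarrow> (g1 has_vector_derivative g2 t) (at t within {0..})"
    and "continuous_on {0..} g2"
    and "bounded (g ` {0..})"
  shows
    "(\<exists>e. (e \<longlongrightarrow> 0) at_top \<and>
       (\<forall>\<^sub>F t in at_top.
          norm (cconv (cconv (impresp \<gamma>1) (impresp \<gamma>2)) g1 t)
            \<le> norm \<gamma>1 * (L1norm (impresp \<gamma>2) + L1norm (cconv (impresp \<gamma>1) (impresp \<gamma>2)))
                * supnorm g + e t))
    \<and> (\<exists>e. (e \<longlongrightarrow> 0) at_top \<and>
       (\<forall>\<^sub>F t in at_top.
          norm (cconv (cconv (impresp \<gamma>1) (impresp \<gamma>2)) g2 t)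
            \<le> norm (\<gamma>1 * \<gamma>2) * (1 + L1norm (impresp \<gamma>1) + L1norm (impresp \<gamma>2)
                 + L1norm (cconv (impresp \<gamma>1) (impresp \<gamma>2))) * supnorm g + e t))
    \<and> (\<forall>\<gamma> \<zeta> :: real. \<gamma> > 0 \<longrightarrow> 0 < \<zeta> \<longrightarrow> \<zeta> \<le> 1 \<longrightarrow>
       (\<forall>s::complex. s\<^sup>2 + 2 * of_real \<zeta> * of_real \<gamma> * s + (of_real \<gamma>)\<^sup>2 = (s + \<gamma>1) * (s + \<gamma>2)) \<longrightarrow>
       L1norm (impresp \<gamma>2) = L1norm (impresp \<gamma>1) \<and> L1norm (impresp \<gamma>1) \<le> 1 / \<zeta>
       \<and> L1norm (cconv (impresp \<gamma>1) (impresp \<gamma>2)) \<le> 1 / \<zeta>\<^sup>2)"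
proof -
  let ?h1 = "impresp \<gamma>1" and ?h2 = "impresp \<gamma>2" and ?H = "Hc \<gamma>1 \<gamma>2"
  have a0: "Re \<gamma>1 > 0" and b0: "Re \<gamma>2 > 0" using assms by auto
  have gc: "continuous_on {0..} g"
    using assms(3) by (intro continuous_on_vector_derivative) auto
  have g1c: "continuous_on {0..} g1"
    using assms(4) by (intro continuous_on_vector_derivative) auto
  define G where "G = supnorm g"
  have gG: "\<And>\<tau>. \<tau> \<in> {0..t} \<Longrightarrow> norm (g \<tau>) \<le> G" for t
    using supnorm_ge[OF assms(6)] by (auto simp: G_def)
  have dsub: "\<And>s. s \<in> {0..t} \<Longrightarrow> (g has_vector_derivative g1 s) (at s within {0..t})" for t
    by (rule has_vector_derivative_within_subset[OF assms(3)]) auto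
  have dsub1: "\<And>s. s \<in> {0..t} \<Longrightarrow> (g1 has_vector_derivative g2 s) (at s within {0..t})" for t
    by (rule has_vector_derivative_within_subset[OF assms(4)]) auto
  have gct: "continuous_on {0..t} g" for t by (rule continuous_on_subset[OF gc]) auto
  have L1h: "L1norm (cconv ?h1 ?h2) = L1norm ?H"
    unfolding L1norm_def by (rule integral_cong) (simp add: Hc_eq)
  have conv_eq: "cconv (cconv ?h1 ?h2) f t = integral {0..t} (\<lambda>\<tau>. ?H (t - \<tau>) * f \<tau>)"
    if t: "t \<ge> 0" for f t
  proof -
    have "cconv (cconv ?h1 ?h2) f t = integral {0..t} (\<lambda>\<tau>. cconv ?h1 ?h2 (t - \<tau>) * f \<tau>)"
      by (simp only: cconv_def[of "cconv ?h1 ?h2"])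
    also have "\<dots> = integral {0..t} (\<lambda>\<tau>. ?H (t - \<tau>) * f \<tau>)"
      by (rule integral_cong) (simp add: Hc_eq)
    finally show ?thesis .
  qed
  have iH: "((\<lambda>s. norm (?H s)) has_integral L1norm ?H) {0..}"
    unfolding L1norm_def using Hc_int[OF a0 b0] by (rule integrable_integral)
  have i1: "((\<lambda>s. norm (?h1 s)) has_integral L1norm ?h1) {0..}"
    using int_impresp[OF a0] L1norm_impresp[OF a0] by simp
  have i2: "((\<lambda>s. norm (?h2 s)) has_integral L1norm ?h2) {0..}"
    using int_impresp[OF b0] L1norm_impresp[OF b0] by simp

  define w1 where "w1 = (\<lambda>s. norm \<gamma>1 * (norm (?h2 s) + norm (?H s)))"
  have w1i: "(w1 has_integral norm \<gamma>1 * (L1norm ?h2 + L1norm ?H)) {0..}"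
    unfolding w1_def by (intro has_integral_mult_right has_integral_add i2 iH)
  have P1: "norm (cconv (cconv ?h1 ?h2) g1 t)
     \<le> norm \<gamma>1 * (L1norm ?h2 + L1norm (cconv ?h1 ?h2)) * G + norm (?H t) * norm (g 0)"
    if t: "t \<ge> 0" for t
  proof -
    have eq: "cconv (cconv ?h1 ?h2) g1 t = - (?H t * g 0) + integral {0..t} (\<lambda>\<tau>. Hd \<gamma>1 \<gamma>2 (t - \<tau>) * g \<tau>)"
      using conv_eq[OF t, of g1] ibp[of ?H "Hd \<gamma>1 \<gamma>2" t g g1, OF Hc_deriv cont_Hd dsub t] by simp
    have bnd: "norm (integral {0..t} (\<lambda>\<tau>. Hd \<gamma>1 \<gamma>2 (t - \<tau>) * g \<tau>)) \<le> integral {0..} w1 * G"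
    proof (rule conv_bound[OF cont_Hd _ _ _ gct gG t])
      show "continuous_on {0..} w1" unfolding w1_def
        by (intro continuous_intros cont_impresp cont_Hc)
      show "w1 integrable_on {0..}" using w1i by blast
      show "norm (Hd \<gamma>1 \<gamma>2 s) \<le> w1 s" for s
        unfolding w1_def Hd_def norm_mult
        by (intro mult_left_mono norm_triangle_ineq4) auto
    qed
    have "norm (cconv (cconv ?h1 ?h2) g1 t) \<le> norm (?H t * g 0) + norm (integral {0..t} (\<lambda>\<tau>. Hd \<gamma>1 \<gamma>2 (t - \<tau>) * g \<tau>))"
      unfolding eq by (metis norm_minus_cancel norm_triangle_ineq)
    then show ?thesis using bnd integral_unique[OF w1i] L1h by (simp add: norm_mult)
  qed

  define w2 where "w2 = (\<lambda>s. norm (\<gamma>1 * \<gamma>2) * (norm (?h2 s) + norm (?h1 s) + norm (?H s)))"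
  have w2i: "(w2 has_integral norm (\<gamma>1 * \<gamma>2) * (L1norm ?h2 + L1norm ?h1 + L1norm ?H)) {0..}"
    unfolding w2_def by (intro has_integral_mult_right has_integral_add i1 i2 iH)
  have P2: "norm (cconv (cconv ?h1 ?h2) g2 t)
     \<le> norm (\<gamma>1 * \<gamma>2) * (1 + L1norm ?h1 + L1norm ?h2 + L1norm (cconv ?h1 ?h2)) * G
        + (norm (?H t) * norm (g1 0) + norm (Hd \<gamma>1 \<gamma>2 t) * norm (g 0))"
    if t: "t \<ge> 0" for t
  proof -
    let ?I = "integral {0..t} (\<lambda>\<tau>. Hdd \<gamma>1 \<gamma>2 (t - \<tau>) * g \<tau>)"
    have eq1: "cconv (cconv ?h1 ?h2) g2 t = - (?H t * g1 0) + integral {0..t} (\<lambda>\<tau>. Hd \<gamma>1 \<gamma>2 (t - \<tau>) * g1 \<tau>)"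
      using conv_eq[OF t, of g2] ibp[of ?H "Hd \<gamma>1 \<gamma>2" t g1 g2, OF Hc_deriv cont_Hd dsub1 t] by simp
    have eq2: "integral {0..t} (\<lambda>\<tau>. Hd \<gamma>1 \<gamma>2 (t - \<tau>) * g1 \<tau>) = \<gamma>1 * \<gamma>2 * g t - Hd \<gamma>1 \<gamma>2 t * g 0 + ?I"
      using ibp[of "Hd \<gamma>1 \<gamma>2" "Hdd \<gamma>1 \<gamma>2" t g g1, OF Hd_deriv cont_Hdd dsub t] by (simp add: Hd_0)
    have bnd: "norm ?I \<le> integral {0..} w2 * G"
    proof (rule conv_bound[OF cont_Hdd _ _ _ gct gG t])
      show "continuous_on {0..} w2" unfolding w2_def
        by (intro continuous_intros cont_impresp cont_Hc)
      show "w2 integrable_on {0..}" using w2i by blast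
      show "norm (Hdd \<gamma>1 \<gamma>2 s) \<le> w2 s" for s
        unfolding w2_def Hdd_def norm_mult norm_minus_cancel
        by (intro mult_left_mono norm3) auto
    qed
    have gt: "norm (g t) \<le> G" using gG[of t t] t by auto
    have "norm (cconv (cconv ?h1 ?h2) g2 t) \<le> norm (?H t * g1 0) + norm (\<gamma>1 * \<gamma>2 * g t) + norm (Hd \<gamma>1 \<gamma>2 t * g 0) + norm ?I"
      unfolding eq1 eq2
      by (smt (verit) norm_minus_cancel norm_triangle_ineq norm_triangle_ineq4)
    moreover have "norm (\<gamma>1 * \<gamma>2 * g t) \<le> norm (\<gamma>1 * \<gamma>2) * G"
      unfolding norm_mult[of "\<gamma>1 * \<gamma>2"] by (intro mult_left_mono gt) auto
    moreover have "integral {0..} w2 * G = norm (\<gamma>1 * \<gamma>2) * (L1norm ?h1 + L1norm ?h2 + L1norm (cconv ?h1 ?h2)) * G"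
      using integral_unique[OF w2i] L1h by (simp add: algebra_simps)
    ultimately show ?thesis using bnd by (simp add: norm_mult algebra_simps)
  qed

  have part1: "\<exists>e. (e \<longlongrightarrow> 0) at_top \<and>
       (\<forall>\<^sub>F t in at_top.
          norm (cconv (cconv ?h1 ?h2) g1 t)
            \<le> norm \<gamma>1 * (L1norm ?h2 + L1norm (cconv ?h1 ?h2)) * supnorm g + e t)"
  proof (intro exI conjI)
    show "((\<lambda>t. norm (?H t) * norm (g 0)) \<longlongrightarrow> 0) at_top"
      by (intro tendsto_mult_left_zero tendsto_norm_zero Hc_lim a0 b0)
    show "\<forall>\<^sub>F t in at_top. norm (cconv (cconv ?h1 ?h2) g1 t)
            \<le> norm \<gamma>1 * (L1norm ?h2 + L1norm (cconv ?h1 ?h2)) * supnorm g + norm (?H t) * norm (g 0)"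
      using eventually_ge_at_top[of "0::real"] by eventually_elim (use P1 in \<open>simp add: G_def\<close>)
  qed
  have part2: "\<exists>e. (e \<longlongrightarrow> 0) at_top \<and>
       (\<forall>\<^sub>F t in at_top.
          norm (cconv (cconv ?h1 ?h2) g2 t)
            \<le> norm (\<gamma>1 * \<gamma>2) * (1 + L1norm ?h1 + L1norm ?h2
                 + L1norm (cconv ?h1 ?h2)) * supnorm g + e t)"
  proof (intro exI conjI)
    show "((\<lambda>t. norm (?H t) * norm (g1 0) + norm (Hd \<gamma>1 \<gamma>2 t) * norm (g 0)) \<longlongrightarrow> 0) at_top"
      using tendsto_add[OF tendsto_mult_left_zero[OF tendsto_norm_zero[OF Hc_lim[OF a0 b0]]]
                           tendsto_mult_left_zero[OF tendsto_norm_zero[OF Hd_lim[OF a0 b0]]]]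
      by simp
    show "\<forall>\<^sub>F t in at_top. norm (cconv (cconv ?h1 ?h2) g2 t)
            \<le> norm (\<gamma>1 * \<gamma>2) * (1 + L1norm ?h1 + L1norm ?h2
                 + L1norm (cconv ?h1 ?h2)) * supnorm g + (norm (?H t) * norm (g1 0) + norm (Hd \<gamma>1 \<gamma>2 t) * norm (g 0))"
      using eventually_ge_at_top[of "0::real"] by eventually_elim (use P2 in \<open>simp add: G_def\<close>)
  qed

  have part3: "L1norm ?h2 = L1norm ?h1 \<and> L1norm ?h1 \<le> 1 / \<zeta>
       \<and> L1norm (cconv ?h1 ?h2) \<le> 1 / \<zeta>\<^sup>2"
    if g0: "\<gamma> > 0" and z0: "0 < \<zeta>" and z1: "\<zeta> \<le> 1"
      and fac: "\<forall>s::complex. s\<^sup>2 + 2 * of_real \<zeta> * of_real \<gamma> * s + (of_real \<gamma>)\<^sup>2 = (s + \<gamma>1) * (s + \<gamma>2)"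
    for \<gamma> \<zeta> :: real
  proof -
    have prod: "\<gamma>1 * \<gamma>2 = of_real (\<gamma>\<^sup>2)" using fac[rule_format, of 0] by simp
    have "1 + 2 * of_real \<zeta> * of_real \<gamma> + (of_real \<gamma>)\<^sup>2 = (1 + \<gamma>1) * (1 + \<gamma>2)"
      using fac[rule_format, of 1] by simp
    also have "\<dots> = 1 + (\<gamma>1 + \<gamma>2) + \<gamma>1 * \<gamma>2" by (simp add: algebra_simps)
    finally have sum: "\<gamma>1 + \<gamma>2 = of_real (2 * \<zeta> * \<gamma>)" using prod by simp
    define x where "x = Re \<gamma>1"
    define y where "y = Im \<gamma>1"
    have r2: "Re \<gamma>2 = 2 * \<zeta> * \<gamma> - x" and i2: "Im \<gamma>2 = - y"
      using arg_cong[OF sum, of Re] arg_cong[OF sum, of Im] by (auto simp: x_def y_def)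
    have re: "x * (2 * \<zeta> * \<gamma> - x) + y * y = \<gamma>\<^sup>2"
      using arg_cong[OF prod, of Re] r2 i2 by (simp add: x_def y_def)
    have im: "y * (2 * \<zeta> * \<gamma> - 2 * x) = 0"
      using arg_cong[OF prod, of Im] r2 i2 by (simp add: x_def y_def algebra_simps)
    have xz: "x = \<zeta> * \<gamma>"
    proof (cases "y = 0")
      case True
      then have "(x - \<zeta> * \<gamma>)\<^sup>2 = (\<zeta>\<^sup>2 - 1) * \<gamma>\<^sup>2" using re by (simp add: power2_eq_square algebra_simps)
      also have "\<dots> \<le> 0" using z0 z1 by (intro mult_nonpos_nonneg) (auto simp: power2_eq_square mult_le_one)
      finally show ?thesis by simp
    next
      case False
      then show ?thesis using im by simp
    qed
    have n1sq: "x\<^sup>2 + y\<^sup>2 = \<gamma>\<^sup>2" using re xz by (simp add: power2_eq_square algebra_simps)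
    have n1: "norm \<gamma>1 = \<gamma>"
      unfolding cmod_def x_def[symmetric] y_def[symmetric] n1sq using g0 by simp
    have n12: "norm \<gamma>1 * norm \<gamma>2 = \<gamma>\<^sup>2"
      using arg_cong[OF prod, of norm] g0 by (simp add: norm_mult norm_power)
    have n2: "norm \<gamma>2 = \<gamma>" using n12 n1 g0 by (simp add: power2_eq_square)
    have ra: "Re \<gamma>1 = \<zeta> * \<gamma>" and rb: "Re \<gamma>2 = \<zeta> * \<gamma>" using xz r2 by (auto simp: x_def)
    have L1: "L1norm ?h1 = 1 / \<zeta>" and L2: "L1norm ?h2 = 1 / \<zeta>"
      using L1norm_impresp[OF a0] L1norm_impresp[OF b0] n1 n2 ra rb g0 by auto
    have m: "min (Re \<gamma>1) (Re \<gamma>2) = \<zeta> * \<gamma>" using ra rb by simp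
    have mpos: "\<zeta> * \<gamma> > 0" using z0 g0 by simp
    have "L1norm ?H \<le> integral {0..} (\<lambda>t. norm \<gamma>1 * norm \<gamma>2 * (exp (- (\<zeta> * \<gamma>) * t) * t))"
      unfolding L1norm_def
    proof (rule integral_le)
      show "(\<lambda>t. norm (?H t)) integrable_on {0..}" by (rule Hc_int[OF a0 b0])
      show "(\<lambda>t. norm \<gamma>1 * norm \<gamma>2 * (exp (- (\<zeta> * \<gamma>) * t) * t)) integrable_on {0..}"
        using has_integral_mult_right[OF int_texp[OF mpos]] by blast
      show "norm (?H t) \<le> norm \<gamma>1 * norm \<gamma>2 * (exp (- (\<zeta> * \<gamma>) * t) * t)" if "t \<in> {0..}" for t
        using Hc_bound[of t \<gamma>1 \<gamma>2] that m by (simp add: mult.assoc)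
    qed
    also have "\<dots> = \<gamma>\<^sup>2 * (1 / (\<zeta> * \<gamma>)\<^sup>2)"
      using integral_unique[OF has_integral_mult_right[OF int_texp[OF mpos]]] n12 by simp
    also have "\<dots> = 1 / \<zeta>\<^sup>2" using g0 by (simp add: power2_eq_square field_simps)
    finally show ?thesis using L1 L2 L1h by simp
  qed
  show ?thesis using part1 part2 part3 by blast
qed

end
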